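(* Let a group $G$ act on a set $X$, and suppose there are subsets $X_1,\dots,X_n\subseteq X$ and elements $h_1,\dots,h_n\in G$ such that, with $X_{n+1}:=X_1$, we have $h_iX_i\subseteq X_{i+1}$ for $1\le i\le n$ and $X=\bigcup_{i=1}^n\left(X_{i+1}\setminus h_iX_i\right)$. Then $G\curvearrowright X$ is paradoxical and $\tau(G\curvearrowright X)\le n+2$.
   Context: A paradoxical decomposition of $G\curvearrowright X$ consists of pairwise disjoint subsets $A_1,\dots,A_p,B_1,\dots,B_q$ of $X$ and elements $g_1,\dots,g_p,k_1,\dots,k_q\in G$ with $X=\bigcup_{i=1}^p g_iA_i=\bigcup_{j=1}^q k_jB_j$; the action is paradoxical if one exists. The Tarski number $\tau(G\curvearrowright X)$ is the minimal number of pieces $p+q$ in such a decomposition, and $\infty$ if none exists. *)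

theory Defs
  imports "HOL-Algebra.Group_Action" "HOL-Library.Extended_Nat"
begin

definition paradoxical_decomposition ::
  "('a, 'c) monoid_scheme \<Rightarrow> 'b set \<Rightarrow> ('a \<Rightarrow> 'b \<Rightarrow> 'b)
   \<Rightarrow> nat \<Rightarrow> nat \<Rightarrow> (nat \<Rightarrow> 'b set) \<Rightarrow> (nat \<Rightarrow> 'b set)
   \<Rightarrow> (nat \<Rightarrow> 'a) \<Rightarrow> (nat \<Rightarrow> 'a) \<Rightarrow> bool" where
  "paradoxical_decomposition G X act p q A B g k \<longleftrightarrow>
     (\<forall>i<p. A i \<subseteq> X) \<and> (\<forall>j<q. B j \<subseteq> X) \<and>
     (\<forall>i<p. g i \<in> carrier G) \<and> (\<forall>j<q. k j \<in> carrier G) \<and>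
     (\<forall>i<p. \<forall>i'<p. i \<noteq> i' \<longrightarrow> A i \<inter> A i' = {}) \<and>
     (\<forall>j<q. \<forall>j'<q. j \<noteq> j' \<longrightarrow> B j \<inter> B j' = {}) \<and>
     (\<forall>i<p. \<forall>j<q. A i \<inter> B j = {}) \<and>
     X = (\<Union>i<p. act (g i) ` A i) \<and>
     X = (\<Union>j<q. act (k j) ` B j)"

definition paradoxical_with ::
  "('a, 'c) monoid_scheme \<Rightarrow> 'b set \<Rightarrow> ('a \<Rightarrow> 'b \<Rightarrow> 'b) \<Rightarrow> nat \<Rightarrow> bool" where
  "paradoxical_with G X act m \<longleftrightarrow>
     (\<exists>p q A B g k. p + q = m \<and> paradoxical_decomposition G X act p q A B g k)"

definition paradoxical ::
  "('a, 'c) monoid_scheme \<Rightarrow> 'b set \<Rightarrow> ('a \<Rightarrow> 'b \<Rightarrow> 'b) \<Rightarrow> bool" where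
  "paradoxical G X act \<longleftrightarrow> (\<exists>m. paradoxical_with G X act m)"

definition tarski_number ::
  "('a, 'c) monoid_scheme \<Rightarrow> 'b set \<Rightarrow> ('a \<Rightarrow> 'b \<Rightarrow> 'b) \<Rightarrow> enat" where
  "tarski_number G X act =
     (if paradoxical G X act then enat (LEAST m. paradoxical_with G X act m) else \<infinity>)"

end

theory Submission
  imports Defs
begin

fun Mp :: "('a, 'c) monoid_scheme \<Rightarrow> (nat \<Rightarrow> 'a) \<Rightarrow> nat \<Rightarrow> nat \<Rightarrow> 'a" where
  "Mp G h i 0 = \<one>\<^bsub>G\<^esub>"
| "Mp G h i (Suc j) = (if Suc j \<le> i then \<one>\<^bsub>G\<^esub> else h (Suc j) \<otimes>\<^bsub>G\<^esub> Mp G h i j)"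

lemma (in group_action) act_one_id:
  "y \<in> E \<Longrightarrow> \<phi> \<one> y = y"
  by (metis id_eq_one restrict_apply')

lemma (in group_action) Mp_carrier:
  assumes "\<forall>k\<in>{1..n}. h k \<in> carrier G" "j \<le> n"
  shows "Mp G h i j \<in> carrier G"
  using assms(2)
proof (induction j)
  case 0
  interpret group G using group_hom group_hom.axioms(1) by auto
  show ?case by simp
next
  case (Suc j)
  interpret group G using group_hom group_hom.axioms(1) by auto
  show ?case using Suc assms(1) by auto
qed

lemma (in group_action) Mp_comp:
  assumes "\<forall>k\<in>{1..n}. h k \<in> carrier G" "j \<le> n" "i \<le> i'" "i' \<le> j" "y \<in> E"
  shows "\<phi> (Mp G h i j) y = \<phi> (Mp G h i' j) (\<phi> (Mp G h i i') y)"
  using assms(2,4)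
proof (induction j)
  case 0
  then show ?case using assms act_one_id by simp
next
  case (Suc j)
  have "Mp G h i i' \<in> carrier G" using Mp_carrier[OF assms(1)] Suc.prems by simp
  then have yE: "\<phi> (Mp G h i i') y \<in> E"
    using assms(5) element_image by blast
  show ?case
  proof (cases "Suc j \<le> i'")
    case True
    then have "i' = Suc j" using Suc.prems by simp
    then show ?thesis using yE act_one_id by simp
  next
    case False
    then have "\<not> Suc j \<le> i" using assms(3) by simp
    then have "\<phi> (Mp G h i (Suc j)) y = \<phi> (h (Suc j)) (\<phi> (Mp G h i j) y)"
      using composition_rule assms Mp_carrier[OF assms(1)] Suc.prems by simp
    also have "\<dots> = \<phi> (h (Suc j)) (\<phi> (Mp G h i' j) (\<phi> (Mp G h i i') y))"
      using Suc False by simp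
    also have "\<dots> = \<phi> (Mp G h i' (Suc j)) (\<phi> (Mp G h i i') y)"
      using False composition_rule yE assms Mp_carrier[OF assms(1)] Suc.prems by simp
    finally show ?thesis .
  qed
qed

lemma (in group_action) Mp_image:
  assumes "\<forall>k\<in>{1..n}. h k \<in> carrier G" "\<forall>k\<in>{1..n+1}. Xs k \<subseteq> E"
    and "\<forall>k\<in>{1..n}. \<phi> (h k) ` Xs k \<subseteq> Xs (k + 1)"
    and "j \<le> n" "i \<le> j"
  shows "\<phi> (Mp G h i j) ` Xs (i+1) \<subseteq> Xs (j+1)"
  using assms(4,5)
proof (induction j)
  case 0
  have "Xs 1 \<subseteq> E" using assms(2) by auto
  then show ?case using 0 act_one_id by force
next
  case (Suc j)
  show ?case
  proof (cases "Suc j \<le> i")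
    case True
    then have "i = Suc j" using Suc.prems by simp
    then show ?thesis using Suc.prems assms(2) act_one_id by fastforce
  next
    case False
    show ?thesis
    proof
      fix z assume "z \<in> \<phi> (Mp G h i (Suc j)) ` Xs (i+1)"
      then obtain y where y: "y \<in> Xs (i+1)" "z = \<phi> (Mp G h i (Suc j)) y" by auto
      have yE: "y \<in> E" using y assms(2) Suc.prems by auto
      have "z = \<phi> (h (Suc j)) (\<phi> (Mp G h i j) y)"
        using y False composition_rule yE assms Mp_carrier[OF assms(1)] Suc.prems by simp
      moreover have "\<phi> (Mp G h i j) y \<in> Xs (Suc j)" using Suc False y by auto
      ultimately show "z \<in> Xs (Suc j + 1)" using assms(3) Suc.prems by fastforce
    qed
  qed
qed

theorem mainTheorem13:
  fixes G :: "('a, 'c) monoid_scheme" and X :: "'b set" and act :: "'a \<Rightarrow> 'b \<Rightarrow> 'b"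
    and n :: nat and Xs :: "nat \<Rightarrow> 'b set" and h :: "nat \<Rightarrow> 'a"
  assumes "group_action G X act"
    and "\<forall>i\<in>{1..n}. Xs i \<subseteq> X"
    and "\<forall>i\<in>{1..n}. h i \<in> carrier G"
    and "Xs (n + 1) = Xs 1"
    and "\<forall>i\<in>{1..n}. act (h i) ` Xs i \<subseteq> Xs (i + 1)"
    and "X = (\<Union>i\<in>{1..n}. Xs (i + 1) - act (h i) ` Xs i)"
  shows "paradoxical G X act \<and> tarski_number G X act \<le> enat (n + 2)"
proof (cases "n = 0")
  case True
  then have X0: "X = {}" using assms(6) by simp
  have "paradoxical_decomposition G X act 0 0 (\<lambda>_. {}) (\<lambda>_. {}) (\<lambda>_. undefined) (\<lambda>_. undefined)"
    unfolding paradoxical_decomposition_def using X0 by simp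
  then have pw: "paradoxical_with G X act 0" unfolding paradoxical_with_def by fastforce
  then have "paradoxical G X act" unfolding paradoxical_def by blast
  moreover have "(LEAST m. paradoxical_with G X act m) \<le> n + 2"
    using pw by (meson Least_le le0 order_trans)
  ultimately show ?thesis unfolding tarski_number_def by simp
next
  case False
  interpret group_action G X act by (rule assms(1))
  interpret group G using group_hom group_hom.axioms(1) by auto
  have hc: "\<forall>k\<in>{1..n}. h k \<in> carrier G" using assms(3) .
  have XsE: "\<forall>k\<in>{1..n+1}. Xs k \<subseteq> X"
  proof
    fix k assume k: "k \<in> {1..n+1}"
    show "Xs k \<subseteq> X"
    proof (cases "k = n + 1")
      case True then show ?thesis using assms(2,4) False by auto
    next
      case False then show ?thesis using assms(2) k by auto
    qed
  qed
  have X1: "Xs 1 \<subseteq> X" using XsE by auto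
  define D where "D i = Xs (i + 1) - act (h i) ` Xs i" for i
  define Ei where "Ei i = D i - (\<Union>k\<in>{1..<i}. D k)" for i
  define C where "C i = (if i = 0 then Xs 1 else Ei i)" for i
  define P where "P i = act (Mp G h i n) ` C i" for i
  have CX: "C i \<subseteq> Xs (i + 1)" for i unfolding C_def Ei_def D_def by auto
  have CE: "i \<le> n \<Longrightarrow> C i \<subseteq> X" for i using CX XsE by fastforce
  have Mc: "j \<le> n \<Longrightarrow> Mp G h i j \<in> carrier G" for i j using Mp_carrier[OF hc] by blast
  have PX1: "i \<le> n \<Longrightarrow> P i \<subseteq> Xs 1" for i
    using Mp_image[OF hc XsE assms(5), of n i] CX assms(4) unfolding P_def by fastforce
  have Pdisj: "P i \<inter> P i' = {}" if ii: "i < i'" "i' \<le> n" for i i'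
  proof (rule ccontr)
    assume "P i \<inter> P i' \<noteq> {}"
    then obtain y z where yz: "y \<in> C i" "z \<in> C i'" "act (Mp G h i n) y = act (Mp G h i' n) z"
      unfolding P_def by auto
    have yE: "y \<in> X" using yz(1) CE[of i] ii by auto
    have zE: "z \<in> X" using yz(2) CE[of i'] ii by auto
    have "act (Mp G h i n) y = act (Mp G h i' n) (act (Mp G h i i') y)"
      using Mp_comp[OF hc, of n i i' y] ii yE by simp
    moreover have wE: "act (Mp G h i i') y \<in> X" using Mc ii yE element_image by blast
    ultimately have w: "act (Mp G h i i') y = z"
      using yz inj_prop[OF Mc[of n i']] zE unfolding inj_on_def by auto
    obtain j where j: "i' = Suc j" using ii by (cases i') auto
    have "act (Mp G h i i') y = act (h i') (act (Mp G h i j) y)"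
      using j ii composition_rule[OF yE] hc Mc[of j i] by auto
    moreover have "act (Mp G h i j) y \<in> Xs i'"
      using Mp_image[OF hc XsE assms(5), of j i] CX yz j ii by fastforce
    ultimately have "z \<in> act (h i') ` Xs i'" using w by auto
    moreover have "z \<in> D i'" using yz(2) ii unfolding C_def Ei_def by auto
    ultimately show False unfolding D_def by auto
  qed
  have backP: "act (inv\<^bsub>G\<^esub> (Mp G h i n)) ` P i = C i" if "i \<le> n" for i
  proof -
    have "act (inv\<^bsub>G\<^esub> (Mp G h i n)) (act (Mp G h i n) y) = y" if "y \<in> C i" for y
      using orbit_sym_aux[OF Mc[of n i]] CE \<open>i \<le> n\<close> that by blast
    then show ?thesis unfolding P_def by (simp add: image_image)
  qed
  have Ecover: "(\<Union>i\<in>{1..n}. Ei i) = X"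
  proof
    show "(\<Union>i\<in>{1..n}. Ei i) \<subseteq> X" using assms(6) unfolding Ei_def D_def by auto
    show "X \<subseteq> (\<Union>i\<in>{1..n}. Ei i)"
    proof
      fix x assume "x \<in> X"
      then have ex: "\<exists>i. i \<in> {1..n} \<and> x \<in> D i" using assms(6) unfolding D_def by auto
      define m where "m = (LEAST i. i \<in> {1..n} \<and> x \<in> D i)"
      have m: "m \<in> {1..n} \<and> x \<in> D m" using LeastI_ex[OF ex] m_def by simp
      have "\<And>k. k < m \<Longrightarrow> \<not> (k \<in> {1..n} \<and> x \<in> D k)" using not_less_Least m_def by blast
      then have "x \<in> Ei m" using m unfolding Ei_def by auto
      then show "x \<in> (\<Union>i\<in>{1..n}. Ei i)" using m by blast
    qed
  qed
  define A where "A j = P (Suc j)" for j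
  define g where "g j = inv\<^bsub>G\<^esub> (Mp G h (Suc j) n)" for j
  define B where "B j = (if j = 0 then X - Xs 1 else P 0)" for j :: nat
  define k where "k j = (if j = 0 then \<one>\<^bsub>G\<^esub> else inv\<^bsub>G\<^esub> (Mp G h 0 n))" for j :: nat
  have Acov: "(\<Union>i<n. act (g i) ` A i) = X"
  proof -
    have "(\<Union>i<n. act (g i) ` A i) = (\<Union>i<n. Ei (Suc i))"
      unfolding A_def g_def using backP C_def by auto
    also have "\<dots> = (\<Union>i\<in>Suc ` {..<n}. Ei i)" by simp
    also have "\<dots> = (\<Union>i\<in>{1..n}. Ei i)" by (simp add: image_Suc_lessThan)
    finally show ?thesis using Ecover by simp
  qed
  have Bcov: "(\<Union>j<2. act (k j) ` B j) = X"
  proof -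
    have "act \<one>\<^bsub>G\<^esub> ` (X - Xs 1) = X - Xs 1" using act_one_id by auto
    moreover have "act (inv\<^bsub>G\<^esub> (Mp G h 0 n)) ` P 0 = Xs 1" using backP[of 0] C_def by simp
    ultimately have "(\<Union>j<2. act (k j) ` B j) = (X - Xs 1) \<union> Xs 1"
      unfolding k_def B_def by (auto simp: numeral_2_eq_2 lessThan_Suc)
    then show ?thesis using X1 by auto
  qed
  have pd: "paradoxical_decomposition G X act n 2 A B g k"
    unfolding paradoxical_decomposition_def
  proof (intro conjI)
    show "\<forall>i<n. A i \<subseteq> X"
    proof (intro allI impI)
      fix i assume "i < n"
      then have "P (Suc i) \<subseteq> Xs 1" using PX1[of "Suc i"] by simp
      then show "A i \<subseteq> X" using X1 unfolding A_def by blast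
    qed
    show "\<forall>j<2. B j \<subseteq> X" using PX1[of 0] X1 unfolding B_def by auto
    show "\<forall>i<n. g i \<in> carrier G" unfolding g_def using Mc by auto
    show "\<forall>j<2. k j \<in> carrier G" unfolding k_def using Mc by auto
    show "\<forall>i<n. \<forall>i'<n. i \<noteq> i' \<longrightarrow> A i \<inter> A i' = {}"
    proof (intro allI impI)
      fix i i' assume "i < n" "i' < n" "i \<noteq> i'"
      then consider "Suc i < Suc i'" | "Suc i' < Suc i" by linarith
      then show "A i \<inter> A i' = {}" unfolding A_def
        using Pdisj[of "Suc i" "Suc i'"] Pdisj[of "Suc i'" "Suc i"] \<open>i < n\<close> \<open>i' < n\<close>
        by (cases; simp add: Int_commute)
    qed
    show "\<forall>j<2. \<forall>j'<2. j \<noteq> j' \<longrightarrow> B j \<inter> B j' = {}"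
      unfolding B_def using PX1[of 0] by auto
    show "\<forall>i<n. \<forall>j<2. A i \<inter> B j = {}"
    proof (intro allI impI)
      fix i j :: nat assume ij: "i < n" "j < 2"
      have a: "P (Suc i) \<subseteq> Xs 1" using PX1[of "Suc i"] ij by simp
      have b: "P 0 \<inter> P (Suc i) = {}" using Pdisj[of 0 "Suc i"] ij by simp
      show "A i \<inter> B j = {}" unfolding A_def B_def using a b by auto
    qed
    show "X = (\<Union>i<n. act (g i) ` A i)" using Acov by simp
    show "X = (\<Union>j<2. act (k j) ` B j)" using Bcov by simp
  qed
  then have pw: "paradoxical_with G X act (n + 2)" unfolding paradoxical_with_def by blast
  then have "paradoxical G X act" unfolding paradoxical_def by blast
  moreover have "(LEAST m. paradoxical_with G X act m) \<le> n + 2"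
    using pw by (meson Least_le)
  ultimately show ?thesis unfolding tarski_number_def by simp
qed

end
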